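(* Let $h,n\geq2$ and let $U\leq G$ be regular. Then: (i) $O(U)$ is regular; (ii) $\mathcal{F}^U=\mathcal{F}^{O(U)}$; (iii) $\bigcap_{F\in\mathcal{F}^U}G(F)=O(U)$.
   Context: Permutations compose as $(\sigma\tau)(x)=\sigma(\tau(x))$. Let $G=S_h\times S_n$ and $\mathcal{P}=(S_n)^h$ (preference profiles), with $G$ acting by $(p^{(\varphi,\psi)})_i=\psi\,p_{\varphi^{-1}(i)}$; for $U\leq G$, $p^U=\{p^g:g\in U\}$. $U\leq G$ is regular if for every $p\in\mathcal{P}$, $\{g\in U:p^g=p\}\subseteq S_h\times\{id\}$. A social preference function is any $F:\mathcal{P}\to S_n$; $\mathcal{F}^U$ is the set of $U$-symmetric ones ($F(p^{(\varphi,\psi)})=\psi F(p)$ for all $p$ and $(\varphi,\psi)\in U$), and $G(F)=\{(\varphi,\psi)\in G: F(p^{(\varphi,\psi)})=\psi F(p)\ \forall p\}$. For regular $U$, let $\mathcal{A}(U)$ be the set of regular subgroups $V\leq G$ with $V\geq U$ and $p^V\subseteq p^U$ for all $p\in\mathcal{P}$, and let the orbit extension $O(U)=\langle\mathcal{A}(U)\rangle$ be the subgroup generated by them. *)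

theory Defs
  imports "HOL-Combinatorics.Permutations"
begin

text \<open>Voters are 0..h-1, alternatives are 0..n-1. Permutations are functions
  nat \<Rightarrow> nat that permute the respective range; composition is function
  composition, so (\<sigma>\<tau>)(x) = \<sigma>(\<tau>(x)).\<close>

definition Grp :: "nat \<Rightarrow> nat \<Rightarrow> ((nat \<Rightarrow> nat) \<times> (nat \<Rightarrow> nat)) set" where
  "Grp h n = {(\<phi>, \<psi>). \<phi> permutes {..<h} \<and> \<psi> permutes {..<n}}"

definition is_subgrp :: "nat \<Rightarrow> nat \<Rightarrow> ((nat \<Rightarrow> nat) \<times> (nat \<Rightarrow> nat)) set \<Rightarrow> bool" where
  "is_subgrp h n U \<longleftrightarrow> U \<subseteq> Grp h n \<and> (id, id) \<in> U
     \<and> (\<forall>\<phi>1 \<psi>1 \<phi>2 \<psi>2. (\<phi>1, \<psi>1) \<in> U \<longrightarrow> (\<phi>2, \<psi>2) \<in> U \<longrightarrow> (\<phi>1 \<circ> \<phi>2, \<psi>1 \<circ> \<psi>2) \<in> U)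
     \<and> (\<forall>\<phi> \<psi>. (\<phi>, \<psi>) \<in> U \<longrightarrow> (inv \<phi>, inv \<psi>) \<in> U)"

definition gen_subgrp :: "nat \<Rightarrow> nat \<Rightarrow> ((nat \<Rightarrow> nat) \<times> (nat \<Rightarrow> nat)) set
    \<Rightarrow> ((nat \<Rightarrow> nat) \<times> (nat \<Rightarrow> nat)) set" where
  "gen_subgrp h n A = \<Inter> {V. is_subgrp h n V \<and> A \<subseteq> V}"

text \<open>Preference profiles (S_n)^h, represented canonically (entries outside the
  voter range are id).\<close>
definition profiles :: "nat \<Rightarrow> nat \<Rightarrow> (nat \<Rightarrow> nat \<Rightarrow> nat) set" where
  "profiles h n = {p. (\<forall>i<h. p i permutes {..<n}) \<and> (\<forall>i. h \<le> i \<longrightarrow> p i = id)}"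

definition act :: "nat \<Rightarrow> (nat \<Rightarrow> nat) \<times> (nat \<Rightarrow> nat) \<Rightarrow> (nat \<Rightarrow> nat \<Rightarrow> nat) \<Rightarrow> (nat \<Rightarrow> nat \<Rightarrow> nat)" where
  "act h g p = (\<lambda>i. if i < h then snd g \<circ> p (inv (fst g) i) else id)"

definition orbit :: "nat \<Rightarrow> ((nat \<Rightarrow> nat) \<times> (nat \<Rightarrow> nat)) set \<Rightarrow> (nat \<Rightarrow> nat \<Rightarrow> nat) \<Rightarrow> (nat \<Rightarrow> nat \<Rightarrow> nat) set" where
  "orbit h U p = (\<lambda>g. act h g p) ` U"

definition regular :: "nat \<Rightarrow> nat \<Rightarrow> ((nat \<Rightarrow> nat) \<times> (nat \<Rightarrow> nat)) set \<Rightarrow> bool" where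
  "regular h n U \<longleftrightarrow> is_subgrp h n U \<and>
     (\<forall>p\<in>profiles h n. \<forall>g\<in>U. act h g p = p \<longrightarrow> snd g = id)"

text \<open>Social preference functions: maps from profiles to S_n (values outside
  the profile set are irrelevant and unconstrained).\<close>
definition SPF :: "nat \<Rightarrow> nat \<Rightarrow> ((nat \<Rightarrow> nat \<Rightarrow> nat) \<Rightarrow> (nat \<Rightarrow> nat)) set" where
  "SPF h n = {F. \<forall>p\<in>profiles h n. F p permutes {..<n}}"

definition symF :: "nat \<Rightarrow> nat \<Rightarrow> ((nat \<Rightarrow> nat) \<times> (nat \<Rightarrow> nat)) set
    \<Rightarrow> ((nat \<Rightarrow> nat \<Rightarrow> nat) \<Rightarrow> (nat \<Rightarrow> nat)) set" where
  "symF h n U = {F \<in> SPF h n. \<forall>p\<in>profiles h n. \<forall>(\<phi>, \<psi>)\<in>U. F (act h (\<phi>, \<psi>) p) = \<psi> \<circ> F p}"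

definition symgrp :: "nat \<Rightarrow> nat \<Rightarrow> ((nat \<Rightarrow> nat \<Rightarrow> nat) \<Rightarrow> (nat \<Rightarrow> nat))
    \<Rightarrow> ((nat \<Rightarrow> nat) \<times> (nat \<Rightarrow> nat)) set" where
  "symgrp h n F = {(\<phi>, \<psi>) \<in> Grp h n. \<forall>p\<in>profiles h n. F (act h (\<phi>, \<psi>) p) = \<psi> \<circ> F p}"

definition A_ext :: "nat \<Rightarrow> nat \<Rightarrow> ((nat \<Rightarrow> nat) \<times> (nat \<Rightarrow> nat)) set
    \<Rightarrow> ((nat \<Rightarrow> nat) \<times> (nat \<Rightarrow> nat)) set set" where
  "A_ext h n U = {V. regular h n V \<and> U \<subseteq> V \<and> (\<forall>p\<in>profiles h n. orbit h V p \<subseteq> orbit h U p)}"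

definition orbit_ext :: "nat \<Rightarrow> nat \<Rightarrow> ((nat \<Rightarrow> nat) \<times> (nat \<Rightarrow> nat)) set
    \<Rightarrow> ((nat \<Rightarrow> nat) \<times> (nat \<Rightarrow> nat)) set" where
  "orbit_ext h n U = gen_subgrp h n (\<Union> (A_ext h n U))"

end

theory Submission imports Defs begin

definition gmul :: "(nat \<Rightarrow> nat) \<times> (nat \<Rightarrow> nat) \<Rightarrow> (nat \<Rightarrow> nat) \<times> (nat \<Rightarrow> nat) \<Rightarrow> (nat \<Rightarrow> nat) \<times> (nat \<Rightarrow> nat)" where
  "gmul g1 g2 = (fst g1 \<circ> fst g2, snd g1 \<circ> snd g2)"
definition ginv :: "(nat \<Rightarrow> nat) \<times> (nat \<Rightarrow> nat) \<Rightarrow> (nat \<Rightarrow> nat) \<times> (nat \<Rightarrow> nat)" where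
  "ginv g = (inv (fst g), inv (snd g))"

lemma Grp_D: "g \<in> Grp h n \<Longrightarrow> fst g permutes {..<h} \<and> snd g permutes {..<n}"
  by (cases g) (simp add: Grp_def)

lemma Grp_mul: "g1 \<in> Grp h n \<Longrightarrow> g2 \<in> Grp h n \<Longrightarrow> gmul g1 g2 \<in> Grp h n"
  using Grp_D[of g1 h n] Grp_D[of g2 h n]
  by (simp add: Grp_def gmul_def case_prod_beta permutes_compose)

lemma Grp_inv: "g \<in> Grp h n \<Longrightarrow> ginv g \<in> Grp h n"
  using Grp_D[of g h n] by (simp add: Grp_def ginv_def case_prod_beta permutes_inv)

lemma act_mul:
  assumes "g1 \<in> Grp h n" "g2 \<in> Grp h n"
  shows "act h g1 (act h g2 p) = act h (gmul g1 g2) p"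
proof
  fix i
  have p1: "fst g1 permutes {..<h}" and p2: "fst g2 permutes {..<h}" using assms Grp_D by blast+
  have inv: "inv (fst g1 \<circ> fst g2) = inv (fst g2) \<circ> inv (fst g1)"
    using o_inv_distrib permutes_bij p1 p2 by blast
  have "i < h \<Longrightarrow> inv (fst g1) i < h"
    using permutes_in_image[OF permutes_inv[OF p1]] by auto
  then show "act h g1 (act h g2 p) i = act h (gmul g1 g2) p i"
    by (auto simp: act_def gmul_def inv)
qed

lemma act_id: "p \<in> profiles h n \<Longrightarrow> act h (id, id) p = p"
  by (auto simp: act_def profiles_def)

lemma act_prof:
  assumes "g \<in> Grp h n" "p \<in> profiles h n"
  shows "act h g p \<in> profiles h n"
proof -
  have p1: "fst g permutes {..<h}" and p2: "snd g permutes {..<n}" using assms Grp_D by blast+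
  have "i < h \<Longrightarrow> inv (fst g) i < h" for i
    using permutes_in_image[OF permutes_inv[OF p1]] by auto
  moreover have "i < h \<Longrightarrow> p i permutes {..<n}" for i using assms(2) by (simp add: profiles_def)
  ultimately have "i < h \<Longrightarrow> snd g \<circ> p (inv (fst g) i) permutes {..<n}" for i
    using p2 permutes_compose by blast
  then show ?thesis
    by (simp add: act_def profiles_def)
qed

lemma gmul_inv: "g \<in> Grp h n \<Longrightarrow> gmul (ginv g) g = (id, id)"
  "g \<in> Grp h n \<Longrightarrow> gmul g (ginv g) = (id, id)"
  using Grp_D[of g h n] permutes_inv_o[of "fst g" "{..<h}"] permutes_inv_o[of "snd g" "{..<n}"]
  by (simp_all add: gmul_def ginv_def)

lemma act_inv:
  assumes "g \<in> Grp h n" "p \<in> profiles h n"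
  shows "act h (ginv g) (act h g p) = p" "act h g (act h (ginv g) p) = p"
proof -
  have gi: "ginv g \<in> Grp h n" using assms(1) by (rule Grp_inv)
  show "act h (ginv g) (act h g p) = p"
    using act_mul[OF gi assms(1)] gmul_inv(1)[OF assms(1)] act_id[OF assms(2)] by simp
  show "act h g (act h (ginv g) p) = p"
    using act_mul[OF assms(1) gi] gmul_inv(2)[OF assms(1)] act_id[OF assms(2)] by simp
qed

lemma subgrp_D:
  assumes "is_subgrp h n U"
  shows "U \<subseteq> Grp h n" "(id, id) \<in> U" "\<And>u v. u \<in> U \<Longrightarrow> v \<in> U \<Longrightarrow> gmul u v \<in> U"
    "\<And>u. u \<in> U \<Longrightarrow> ginv u \<in> U"
  using assms unfolding is_subgrp_def gmul_def ginv_def by auto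

lemma subgrpI:
  assumes "U \<subseteq> Grp h n" "(id, id) \<in> U" "\<And>u v. u \<in> U \<Longrightarrow> v \<in> U \<Longrightarrow> gmul u v \<in> U"
    "\<And>u. u \<in> U \<Longrightarrow> ginv u \<in> U"
  shows "is_subgrp h n U"
  using assms unfolding is_subgrp_def gmul_def ginv_def by fastforce

lemma perm_cancel_left:
  assumes "s permutes S" "inv s \<circ> t = id" shows "t = s"
proof -
  have "s \<circ> (inv s \<circ> t) = t" using permutes_inv_o(1)[OF assms(1)] by (simp add: o_assoc)
  then show ?thesis using assms(2) by simp
qed

lemma perm_cancel_right:
  assumes "s permutes S" "a \<circ> s = b \<circ> s" shows "a = b"
proof -
  have "a \<circ> s \<circ> inv s = b \<circ> s \<circ> inv s" using assms(2) by simp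
  then show ?thesis using permutes_inv_o(1)[OF assms(1)] by (simp add: comp_assoc)
qed

lemma reg_snd_eq:
  assumes "regular h n V" "u \<in> V" "v \<in> V" "p \<in> profiles h n" "act h u p = act h v p"
  shows "snd u = snd v"
proof -
  have sg: "is_subgrp h n V" using assms(1) by (simp add: regular_def)
  have uG: "u \<in> Grp h n" and vG: "v \<in> Grp h n" using subgrp_D(1)[OF sg] assms by auto
  have w: "gmul (ginv u) v \<in> V" using subgrp_D[OF sg] assms by auto
  have "act h (gmul (ginv u) v) p = p"
    using act_mul[OF Grp_inv[OF uG] vG, of p] assms(5)[symmetric] act_inv(1)[OF uG assms(4)] by simp
  then have "snd (gmul (ginv u) v) = id" using assms(1,4) w by (auto simp: regular_def)
  then have "inv (snd u) \<circ> snd v = id" by (simp add: gmul_def ginv_def)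
  then show ?thesis using perm_cancel_left Grp_D[OF uG] by metis
qed


lemma symgrp_iff: "g \<in> symgrp h n F \<longleftrightarrow> g \<in> Grp h n \<and> (\<forall>p\<in>profiles h n. F (act h g p) = snd g \<circ> F p)"
  by (cases g) (auto simp: symgrp_def)

lemma symF_iff: "F \<in> symF h n U \<longleftrightarrow> F \<in> SPF h n \<and> (\<forall>p\<in>profiles h n. \<forall>g\<in>U. F (act h g p) = snd g \<circ> F p)"
  by (simp add: symF_def case_prod_beta)

lemma orbit_iff: "x \<in> orbit h U q \<longleftrightarrow> (\<exists>v\<in>U. x = act h v q)"
  by (auto simp: orbit_def)

definition rep :: "nat \<Rightarrow> ((nat \<Rightarrow> nat) \<times> (nat \<Rightarrow> nat)) set \<Rightarrow> (nat \<Rightarrow> nat \<Rightarrow> nat) \<Rightarrow> (nat \<Rightarrow> nat \<Rightarrow> nat)" where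
  "rep h U q = (SOME x. x \<in> orbit h U q)"
definition uq :: "nat \<Rightarrow> ((nat \<Rightarrow> nat) \<times> (nat \<Rightarrow> nat)) set \<Rightarrow> (nat \<Rightarrow> nat \<Rightarrow> nat) \<Rightarrow> (nat \<Rightarrow> nat) \<times> (nat \<Rightarrow> nat)" where
  "uq h U q = (SOME u. u \<in> U \<and> act h u (rep h U q) = q)"
definition Ftau where
  "Ftau h U \<tau> q = snd (uq h U q) \<circ> \<tau> (rep h U q)"

context
  fixes h n U
  assumes reg: "regular h n U"
begin

lemma sg: "is_subgrp h n U" using reg by (simp add: regular_def)
lemma UG: "u \<in> U \<Longrightarrow> u \<in> Grp h n" using subgrp_D(1)[OF sg] by auto

lemma rep_in: "q \<in> profiles h n \<Longrightarrow> rep h U q \<in> orbit h U q"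
proof -
  assume q: "q \<in> profiles h n"
  have "q \<in> orbit h U q" using act_id[OF q] subgrp_D(2)[OF sg] orbit_iff by metis
  then have "\<exists>x. x \<in> orbit h U q" by blast
  then show ?thesis unfolding rep_def by (rule someI_ex)
qed

lemma uq_prop: "q \<in> profiles h n \<Longrightarrow> uq h U q \<in> U \<and> act h (uq h U q) (rep h U q) = q"
proof -
  assume q: "q \<in> profiles h n"
  obtain v where v: "v \<in> U" "rep h U q = act h v q" using rep_in[OF q] orbit_iff by metis
  have "ginv v \<in> U \<and> act h (ginv v) (rep h U q) = q"
    using v act_inv(1)[OF UG[OF v(1)] q] subgrp_D(4)[OF sg] by auto
  then have "\<exists>u. u \<in> U \<and> act h u (rep h U q) = q" by blast
  then show ?thesis unfolding uq_def by (rule someI_ex)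
qed

lemma orbit_act: assumes q: "q \<in> profiles h n" and u: "u \<in> U"
  shows "orbit h U (act h u q) = orbit h U q"
proof
  show "orbit h U (act h u q) \<subseteq> orbit h U q"
  proof
    fix x assume "x \<in> orbit h U (act h u q)"
    then obtain v where v: "v \<in> U" "x = act h v (act h u q)" using orbit_iff by metis
    then have "x = act h (gmul v u) q" using act_mul[OF UG[OF v(1)] UG[OF u]] by simp
    then show "x \<in> orbit h U q" using orbit_iff subgrp_D(3)[OF sg v(1) u] by metis
  qed
  show "orbit h U q \<subseteq> orbit h U (act h u q)"
  proof
    fix x assume "x \<in> orbit h U q"
    then obtain v where v: "v \<in> U" "x = act h v q" using orbit_iff by metis
    have "act h v q = act h v (act h (ginv u) (act h u q))" using act_inv(1)[OF UG[OF u] q] by simp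
    also have "\<dots> = act h (gmul v (ginv u)) (act h u q)"
      using act_mul[OF UG[OF v(1)] UG[OF subgrp_D(4)[OF sg u]]] by simp
    finally show "x \<in> orbit h U (act h u q)"
      using v orbit_iff subgrp_D(3)[OF sg v(1) subgrp_D(4)[OF sg u]] by metis
  qed
qed

lemma rep_act: "q \<in> profiles h n \<Longrightarrow> u \<in> U \<Longrightarrow> rep h U (act h u q) = rep h U q"
  unfolding rep_def using orbit_act by simp

lemma Ftau_sym:
  assumes tau: "\<And>x. \<tau> x permutes {..<n}"
  shows "Ftau h U \<tau> \<in> symF h n U"
  unfolding symF_iff
proof (intro conjI ballI)
  show "Ftau h U \<tau> \<in> SPF h n"
    unfolding SPF_def
  proof (intro CollectI ballI)
    fix p assume p: "p \<in> profiles h n"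
    have "uq h U p \<in> U" using uq_prop[OF p] by blast
    then have "snd (uq h U p) permutes {..<n}" using UG Grp_D by blast
    then show "Ftau h U \<tau> p permutes {..<n}" unfolding Ftau_def by (rule permutes_compose[OF tau])
  qed
  fix p g assume p: "p \<in> profiles h n" and g: "g \<in> U"
  define q where "q = act h g p"
  have q: "q \<in> profiles h n" using act_prof UG g p q_def by blast
  have r: "rep h U q = rep h U p" using rep_act p g q_def by simp
  have u: "uq h U p \<in> U" "act h (uq h U p) (rep h U p) = p" using uq_prop p by auto
  have u'0: "uq h U q \<in> U" "act h (uq h U q) (rep h U q) = q" using uq_prop[OF q] by auto
  note u' = u'0[unfolded r]
  have rp: "rep h U p \<in> profiles h n"
    using rep_in[OF p] orbit_iff act_prof UG p by metis
  have "act h (uq h U q) (rep h U p) = act h (gmul g (uq h U p)) (rep h U p)"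
    using u'(2) q_def u(2) act_mul UG g u(1) by metis
  then have "snd (uq h U q) = snd (gmul g (uq h U p))"
    using reg_snd_eq[OF reg u'(1) subgrp_D(3)[OF sg g u(1)] rp] by blast
  then show "Ftau h U \<tau> (act h g p) = snd g \<circ> Ftau h U \<tau> p"
    unfolding Ftau_def q_def[symmetric] r by (simp add: gmul_def comp_assoc)
qed

end


definition Wset where
  "Wset h n U = {g \<in> Grp h n. \<forall>p\<in>profiles h n. \<exists>u\<in>U. act h g p = act h u p \<and> snd u = snd g}"

context
  fixes h n U
  assumes reg: "regular h n U"
begin

lemma W_sub: "is_subgrp h n (Wset h n U)"
proof (rule subgrpI)
  show "Wset h n U \<subseteq> Grp h n" by (auto simp: Wset_def)
  show "(id, id) \<in> Wset h n U" unfolding Wset_def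
    using subgrp_D(2)[OF sg[OF reg]] by (auto simp: Grp_def)
next
  fix g1 g2 assume g1: "g1 \<in> Wset h n U" and g2: "g2 \<in> Wset h n U"
  have G1: "g1 \<in> Grp h n" and G2: "g2 \<in> Grp h n" using g1 g2 by (auto simp: Wset_def)
  show "gmul g1 g2 \<in> Wset h n U" unfolding Wset_def
  proof (intro CollectI conjI ballI)
    show "gmul g1 g2 \<in> Grp h n" using Grp_mul G1 G2 by blast
    fix p assume p: "p \<in> profiles h n"
    obtain u2 where u2: "u2 \<in> U" "act h g2 p = act h u2 p" "snd u2 = snd g2"
      using g2 p by (auto simp: Wset_def)
    have q: "act h g2 p \<in> profiles h n" using act_prof G2 p by blast
    obtain u1 where u1: "u1 \<in> U" "act h g1 (act h g2 p) = act h u1 (act h g2 p)" "snd u1 = snd g1"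
      using g1 q unfolding Wset_def by blast
    have "act h (gmul g1 g2) p = act h (gmul u1 u2) p"
      using act_mul[OF G1 G2] act_mul[OF UG[OF reg u1(1)] UG[OF reg u2(1)]] u1(2) u2(2) by metis
    moreover have "snd (gmul u1 u2) = snd (gmul g1 g2)" using u1 u2 by (simp add: gmul_def)
    ultimately show "\<exists>u\<in>U. act h (gmul g1 g2) p = act h u p \<and> snd u = snd (gmul g1 g2)"
      using subgrp_D(3)[OF sg[OF reg] u1(1) u2(1)] by blast
  qed
next
  fix g assume g: "g \<in> Wset h n U"
  have G: "g \<in> Grp h n" using g by (auto simp: Wset_def)
  show "ginv g \<in> Wset h n U" unfolding Wset_def
  proof (intro CollectI conjI ballI)
    show "ginv g \<in> Grp h n" using Grp_inv G by blast
    fix p assume p: "p \<in> profiles h n"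
    define q where "q = act h (ginv g) p"
    have q: "q \<in> profiles h n" using act_prof Grp_inv G p q_def by blast
    obtain u where u: "u \<in> U" "act h g q = act h u q" "snd u = snd g"
      using g q by (auto simp: Wset_def)
    have "act h g q = p" using act_inv(2)[OF G p] q_def by simp
    then have "act h (ginv u) p = q" using u act_inv(1)[OF UG[OF reg u(1)] q] by simp
    moreover have "snd (ginv u) = snd (ginv g)" using u by (simp add: ginv_def)
    ultimately show "\<exists>u\<in>U. act h (ginv g) p = act h u p \<and> snd u = snd (ginv g)"
      using subgrp_D(4)[OF sg[OF reg] u(1)] q_def by metis
  qed
qed

lemma W_reg: "regular h n (Wset h n U)"
  unfolding regular_def
proof (intro conjI ballI impI)
  show "is_subgrp h n (Wset h n U)" by (rule W_sub)
  fix p g assume p: "p \<in> profiles h n" and g: "g \<in> Wset h n U" and e: "act h g p = p"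
  obtain u where u: "u \<in> U" "act h g p = act h u p" "snd u = snd g"
    using g p by (auto simp: Wset_def)
  have "snd u = id" using reg p u e unfolding regular_def by metis
  then show "snd g = id" using u by simp
qed

lemma U_W: "U \<subseteq> Wset h n U"
  unfolding Wset_def using UG[OF reg] by blast

lemma W_A: "Wset h n U \<in> A_ext h n U"
  unfolding A_ext_def
proof (intro CollectI conjI ballI W_reg U_W)
  fix p assume p: "p \<in> profiles h n"
  show "orbit h (Wset h n U) p \<subseteq> orbit h U p"
    using p unfolding orbit_def Wset_def by force
qed

lemma A_W: "V \<in> A_ext h n U \<Longrightarrow> V \<subseteq> Wset h n U"
proof
  fix v assume V: "V \<in> A_ext h n U" and v: "v \<in> V"
  have rV: "regular h n V" and UV: "U \<subseteq> V" and orb: "\<forall>p\<in>profiles h n. orbit h V p \<subseteq> orbit h U p"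
    using V by (auto simp: A_ext_def)
  have vG: "v \<in> Grp h n" using UG[OF rV v] .
  show "v \<in> Wset h n U" unfolding Wset_def
  proof (intro CollectI conjI ballI vG)
    fix p assume p: "p \<in> profiles h n"
    have "act h v p \<in> orbit h U p" using orb p v unfolding orbit_def by blast
    then obtain u where u: "u \<in> U" "act h v p = act h u p" unfolding orbit_def by blast
    have "snd u = snd v" using reg_snd_eq[OF rV _ v p] u UV by (metis subsetD)
    then show "\<exists>u\<in>U. act h v p = act h u p \<and> snd u = snd v" using u by blast
  qed
qed

lemma O_W: "orbit_ext h n U = Wset h n U"
proof
  show "orbit_ext h n U \<subseteq> Wset h n U"
    unfolding orbit_ext_def gen_subgrp_def using W_sub A_W by blast
  show "Wset h n U \<subseteq> orbit_ext h n U"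
    unfolding orbit_ext_def gen_subgrp_def using W_A by blast
qed

lemma symF_eq: "symF h n U = symF h n (Wset h n U)"
proof
  show "symF h n (Wset h n U) \<subseteq> symF h n U"
  proof
    fix F assume "F \<in> symF h n (Wset h n U)"
    then show "F \<in> symF h n U" using U_W unfolding symF_iff by blast
  qed
  show "symF h n U \<subseteq> symF h n (Wset h n U)"
  proof
    fix F assume F: "F \<in> symF h n U"
    show "F \<in> symF h n (Wset h n U)" unfolding symF_iff
    proof (intro conjI ballI)
      show "F \<in> SPF h n" using F symF_iff by blast
      fix p g assume p: "p \<in> profiles h n" and g: "g \<in> Wset h n U"
      obtain u where u: "u \<in> U" "act h g p = act h u p" "snd u = snd g"
        using g p by (auto simp: Wset_def)
      then show "F (act h g p) = snd g \<circ> F p" using F p unfolding symF_iff by metis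
    qed
  qed
qed

end


lemma inter_W:
  assumes reg: "regular h n U" and n2: "n \<ge> 2"
  shows "(\<Inter>F\<in>symF h n U. symgrp h n F) = Wset h n U"
proof
  show "Wset h n U \<subseteq> (\<Inter>F\<in>symF h n U. symgrp h n F)"
  proof
    fix g assume g: "g \<in> Wset h n U"
    show "g \<in> (\<Inter>F\<in>symF h n U. symgrp h n F)"
    proof
      fix F assume "F \<in> symF h n U"
      then have F: "F \<in> symF h n (Wset h n U)" using symF_eq[OF reg] by simp
      show "g \<in> symgrp h n F" unfolding symgrp_iff
        using g F unfolding symF_iff Wset_def by blast
    qed
  qed
next
  show "(\<Inter>F\<in>symF h n U. symgrp h n F) \<subseteq> Wset h n U"
  proof
    fix g assume gI: "g \<in> (\<Inter>F\<in>symF h n U. symgrp h n F)"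
    define F0 where "F0 = Ftau h U (\<lambda>_. id)"
    have F0: "F0 \<in> symF h n U" unfolding F0_def by (rule Ftau_sym[OF reg]) simp
    have gF0: "g \<in> symgrp h n F0" using gI F0 by blast
    have G: "g \<in> Grp h n" using gF0 symgrp_iff by blast
    have tr: "Transposition.transpose 0 1 permutes {..<n}" using n2 by (intro permutes_swap_id) auto
    show "g \<in> Wset h n U" unfolding Wset_def
    proof (intro CollectI conjI ballI G)
      fix p assume p: "p \<in> profiles h n"
      define q where "q = act h g p"
      have q: "q \<in> profiles h n" using act_prof[OF G p] q_def by simp
      have e0: "F0 q = snd g \<circ> F0 p" using gF0 p q_def symgrp_iff by blast
      show "\<exists>u\<in>U. act h g p = act h u p \<and> snd u = snd g"
      proof (cases "\<exists>u\<in>U. act h g p = act h u p")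
        case True
        then obtain u where u: "u \<in> U" "act h g p = act h u p" by blast
        have "F0 (act h u p) = snd u \<circ> F0 p" using F0 p u(1) unfolding symF_iff by blast
        then have "F0 q = snd u \<circ> F0 p" using u(2) q_def by simp
        moreover have "F0 \<in> SPF h n" using F0 unfolding symF_iff by blast
        then have "F0 p permutes {..<n}" using p unfolding SPF_def by blast
        ultimately have "snd u \<circ> F0 p = snd g \<circ> F0 p" "F0 p permutes {..<n}" using e0 by simp_all
        then have "snd u = snd g" using perm_cancel_right by blast
        then show ?thesis using u by blast
      next
        case False
        have neq: "rep h U q \<noteq> rep h U p"
        proof
          assume eq: "rep h U q = rep h U p"
          obtain v where v: "v \<in> U" "rep h U q = act h v q" using rep_in[OF reg q] orbit_iff by metis
          obtain w where w: "w \<in> U" "rep h U p = act h w p" using rep_in[OF reg p] orbit_iff by metis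
          have "q = act h (ginv v) (act h w p)"
            using act_inv(1)[OF UG[OF reg v(1)] q] v(2) w(2) eq by simp
          also have "\<dots> = act h (gmul (ginv v) w) p"
            using act_mul[OF UG[OF reg subgrp_D(4)[OF sg[OF reg] v(1)]] UG[OF reg w(1)]] by simp
          finally have "act h g p = act h (gmul (ginv v) w) p" using q_def by simp
          moreover have "gmul (ginv v) w \<in> U" using subgrp_D(3)[OF sg[OF reg] subgrp_D(4)[OF sg[OF reg] v(1)] w(1)] .
          ultimately show False using False by blast
        qed
        define F1 where "F1 = Ftau h U (\<lambda>x. if x = rep h U q then Transposition.transpose 0 1 else id)"
        have tau1: "(if x = rep h U q then Transposition.transpose 0 1 else id) permutes {..<n}" for x
          using tr by (cases "x = rep h U q") simp_all
        have F1: "F1 \<in> symF h n U" unfolding F1_def by (rule Ftau_sym[OF reg]) (rule tau1)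
        have gF1: "g \<in> symgrp h n F1" using gI F1 by blast
        have e1: "F1 q = snd g \<circ> F1 p" using gF1 p unfolding symgrp_iff q_def by blast
        have "F1 p = F0 p" using neq unfolding F1_def F0_def Ftau_def by simp
        then have "F1 q = F0 q" using e0 e1 by simp
        then have c: "snd (uq h U q) \<circ> Transposition.transpose 0 1 = snd (uq h U q) \<circ> id"
          unfolding F1_def F0_def Ftau_def by simp
        have sp: "snd (uq h U q) permutes {..<n}" using uq_prop[OF reg q] UG[OF reg] Grp_D by blast
        have "inv (snd (uq h U q)) \<circ> (snd (uq h U q) \<circ> Transposition.transpose 0 1)
              = inv (snd (uq h U q)) \<circ> (snd (uq h U q) \<circ> id)" using c by simp
        then have "Transposition.transpose 0 1 = (id :: nat \<Rightarrow> nat)"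
          using permutes_inv_o(2)[OF sp] by (simp add: comp_assoc[symmetric])
        then have "Transposition.transpose 0 1 (0::nat) = id 0" by simp
        then show ?thesis by simp
      qed
    qed
  qed
qed

theorem mainTheorem15:
  fixes h n :: nat and U :: "((nat \<Rightarrow> nat) \<times> (nat \<Rightarrow> nat)) set"
  assumes "h \<ge> 2" and "n \<ge> 2" and "regular h n U"
  shows "regular h n (orbit_ext h n U)
    \<and> symF h n U = symF h n (orbit_ext h n U)
    \<and> (\<Inter>F\<in>symF h n U. symgrp h n F) = orbit_ext h n U"
  using O_W[OF assms(3)] W_reg[OF assms(3)] symF_eq[OF assms(3)] inter_W[OF assms(3,2)] by simp

end
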